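(* For every $n\ge0$ and every $c\in\mathbb{Q}$, $R_z\phi_n^{(c)}=\frac{1}{n!}\mathrm{ad}(\theta^{(c)})^n(R_z)$.
   Context: Let $\mathfrak{H}=\mathbb{Q}\langle x,y\rangle$, $z=x+y$. Products of operators denote composition, $[A,B]=AB-BA$, $\mathrm{ad}(A)(B)=[A,B]$; $R_w(w')=w'w$. $H$ is the $\mathbb{Q}$-linear map with $H(w)=\deg(w)w$ for words $w$. $\partial_1$ is the derivation with $\partial_1(x)=xy$, $\partial_1(y)=-xy$. For $c\in\mathbb{Q}$, $\theta^{(c)}$ is the unique $\mathbb{Q}$-linear map with $\theta^{(c)}(x)=\frac12(xz+zx)$, $\theta^{(c)}(y)=\frac12(yz+zy)$ and $\theta^{(c)}(ww')=\theta^{(c)}(w)w'+w\theta^{(c)}(w')+c\,\partial_1(w)H(w')$. The operators $\phi_n^{(c)}$ are defined by $\phi_0^{(c)}=\mathrm{id}$ and $\phi_n^{(c)}=\frac1n\bigl([\theta^{(c)},\phi_{n-1}^{(c)}]+\frac12(R_z\phi_{n-1}^{(c)}+\phi_{n-1}^{(c)}R_z)+c\,\partial_1\phi_{n-1}^{(c)}\bigr)$ for $n\ge1$. *)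

theory Defs
  imports Complex_Main "HOL-Library.Poly_Mapping"
begin

text \<open>The free associative algebra Q<x,y>: finitely supported functions from words
  over the alphabet {x,y} to the rationals.\<close>

datatype letter = X | Y

type_synonym word = "letter list"
type_synonym ncpoly = "word \<Rightarrow>\<^sub>0 rat"

definition wd :: "word \<Rightarrow> ncpoly" where
  "wd w = Poly_Mapping.single w 1"

definition smult :: "rat \<Rightarrow> ncpoly \<Rightarrow> ncpoly" where
  "smult r p = Poly_Mapping.map (\<lambda>a. r * a) p"

definition ncmult :: "ncpoly \<Rightarrow> ncpoly \<Rightarrow> ncpoly" where
  "ncmult p q = (\<Sum>u\<in>Poly_Mapping.keys p. \<Sum>v\<in>Poly_Mapping.keys q.
       Poly_Mapping.single (u @ v) (Poly_Mapping.lookup p u * Poly_Mapping.lookup q v))"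

definition linext :: "(word \<Rightarrow> ncpoly) \<Rightarrow> ncpoly \<Rightarrow> ncpoly" where
  "linext f p = (\<Sum>w\<in>Poly_Mapping.keys p. smult (Poly_Mapping.lookup p w) (f w))"

definition zz :: ncpoly where
  "zz = wd [X] + wd [Y]"

definition Rz :: "ncpoly \<Rightarrow> ncpoly" where
  "Rz p = ncmult p zz"

definition Hop :: "ncpoly \<Rightarrow> ncpoly" where
  "Hop = linext (\<lambda>w. smult (of_nat (length w)) (wd w))"

text \<open>The derivation \<partial>_1 with \<partial>_1(x) = xy, \<partial>_1(y) = -xy,
  determined on words by the Leibniz rule \<partial>_1(a w) = \<partial>_1(a) w + a \<partial>_1(w).\<close>
fun d1_letter :: "letter \<Rightarrow> ncpoly" where
  "d1_letter X = wd [X, Y]"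
| "d1_letter Y = - wd [X, Y]"

fun d1_word :: "word \<Rightarrow> ncpoly" where
  "d1_word [] = 0"
| "d1_word (a # w) = ncmult (d1_letter a) (wd w) + ncmult (wd [a]) (d1_word w)"

definition d1 :: "ncpoly \<Rightarrow> ncpoly" where
  "d1 = linext d1_word"

text \<open>theta^(c): theta(a) = (a z + z a)/2 for letters a, and
  theta(w w') = theta(w) w' + w theta(w') + c \<partial>_1(w) H(w'); on words it is determined
  by splitting off the first letter (and theta(1) = 0, forced by the rule with w = w' = 1).\<close>
definition theta_letter :: "letter \<Rightarrow> ncpoly" where
  "theta_letter a = smult (1/2) (ncmult (wd [a]) zz + ncmult zz (wd [a]))"

fun theta_word :: "rat \<Rightarrow> word \<Rightarrow> ncpoly" where
  "theta_word c [] = 0"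
| "theta_word c (a # w) = ncmult (theta_letter a) (wd w) + ncmult (wd [a]) (theta_word c w)
      + smult c (ncmult (d1_letter a) (Hop (wd w)))"

definition theta :: "rat \<Rightarrow> ncpoly \<Rightarrow> ncpoly" where
  "theta c = linext (theta_word c)"

definition comm :: "(ncpoly \<Rightarrow> ncpoly) \<Rightarrow> (ncpoly \<Rightarrow> ncpoly) \<Rightarrow> ncpoly \<Rightarrow> ncpoly" where
  "comm A B = (\<lambda>p. A (B p) - B (A p))"

definition ad :: "(ncpoly \<Rightarrow> ncpoly) \<Rightarrow> (ncpoly \<Rightarrow> ncpoly) \<Rightarrow> ncpoly \<Rightarrow> ncpoly" where
  "ad A = comm A"

primrec phi :: "rat \<Rightarrow> nat \<Rightarrow> ncpoly \<Rightarrow> ncpoly" where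
  "phi c 0 = id"
| "phi c (Suc n) = (\<lambda>p. smult (1 / of_nat (Suc n))
      (comm (theta c) (phi c n) p
       + smult (1/2) (Rz (phi c n p) + phi c n (Rz p))
       + smult c (d1 (phi c n p))))"

end

theory Submission imports Defs begin


definition lin :: "(ncpoly \<Rightarrow> ncpoly) \<Rightarrow> bool" where
  "lin A \<longleftrightarrow> (\<forall>p q. A (p + q) = A p + A q) \<and> (\<forall>r p. A (smult r p) = smult r (A p))"

lemma lookup_smult [simp]: "Poly_Mapping.lookup (smult r p) k = r * Poly_Mapping.lookup p k"
  unfolding smult_def by (simp add: Poly_Mapping.map.rep_eq when_def)

lemma smult_add: "smult r (p + q) = smult r p + smult r q"
  by (rule poly_mapping_eqI) (simp add: lookup_add algebra_simps)
lemma smult_add_left: "smult (r + s) p = smult r p + smult s p"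
  by (rule poly_mapping_eqI) (simp add: lookup_add algebra_simps)
lemma smult_smult [simp]: "smult r (smult s p) = smult (r * s) p"
  by (rule poly_mapping_eqI) simp
lemma smult_one [simp]: "smult 1 p = p"
  by (rule poly_mapping_eqI) simp
lemma smult_zero [simp]: "smult 0 p = 0"
  by (rule poly_mapping_eqI) simp
lemma smult_zero_right [simp]: "smult r 0 = 0"
  by (rule poly_mapping_eqI) simp
lemma smult_minus: "smult r (- p) = - smult r p"
  by (rule poly_mapping_eqI) simp
lemma smult_diff: "smult r (p - q) = smult r p - smult r q"
  by (rule poly_mapping_eqI) (simp add: lookup_minus algebra_simps)
lemma smult_single: "smult r (Poly_Mapping.single k v) = Poly_Mapping.single k (r * v)"
  by (rule poly_mapping_eqI) (simp add: lookup_single when_def)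

lemma linI: "(\<And>p q. A (p + q) = A p + A q) \<Longrightarrow> (\<And>r p. A (smult r p) = smult r (A p)) \<Longrightarrow> lin A"
  unfolding lin_def by blast
lemma lin_add: "lin A \<Longrightarrow> A (p + q) = A p + A q" unfolding lin_def by blast
lemma lin_smult: "lin A \<Longrightarrow> A (smult r p) = smult r (A p)" unfolding lin_def by blast
lemma lin_zero: "lin A \<Longrightarrow> A 0 = 0"
  using lin_smult[of A 0 0] by simp
lemma lin_minus: "lin A \<Longrightarrow> A (- p) = - A p"
proof -
  assume "lin A"
  have "- p = smult (-1) p" by (rule poly_mapping_eqI) simp
  moreover have "- A p = smult (-1) (A p)" by (rule poly_mapping_eqI) simp
  ultimately show ?thesis using lin_smult[OF \<open>lin A\<close>] by simp
qed
lemma lin_diff: "lin A \<Longrightarrow> A (p - q) = A p - A q"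
  using lin_add[of A p "-q"] lin_minus[of A q] by simp
lemma lin_sum: assumes a: "lin A" shows "A (sum f S) = (\<Sum>x\<in>S. A (f x))"
  by (induction S rule: infinite_finite_induct) (auto simp: lin_zero[OF a] lin_add[OF a])

lemma lin_smult_op: "lin (smult r)"
  by (rule linI) (simp_all add: smult_add mult.commute)
lemma smult_sum: "smult r (sum f S) = (\<Sum>x\<in>S. smult r (f x))"
  using lin_sum[OF lin_smult_op] .

lemma lin_id: "lin id" by (rule linI) simp_all
lemma lin_comp': assumes a: "lin A" and b: "lin B" shows "lin (\<lambda>p. A (B p))"
  by (rule linI) (simp_all add: lin_add[OF a] lin_add[OF b] lin_smult[OF a] lin_smult[OF b])
lemma lin_comp: "lin A \<Longrightarrow> lin B \<Longrightarrow> lin (A \<circ> B)"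
  unfolding comp_def by (rule lin_comp')
lemma lin_plus: assumes a: "lin A" and b: "lin B" shows "lin (\<lambda>p. A p + B p)"
  by (rule linI) (simp_all add: lin_add[OF a] lin_add[OF b] lin_smult[OF a] lin_smult[OF b] smult_add)
lemma lin_minus_op: assumes a: "lin A" and b: "lin B" shows "lin (\<lambda>p. A p - B p)"
proof (rule linI)
  fix p q show "A (p + q) - B (p + q) = (A p - B p) + (A q - B q)"
    unfolding lin_add[OF a] lin_add[OF b] by (simp add: algebra_simps)
next
  fix r p show "A (smult r p) - B (smult r p) = smult r (A p - B p)"
    unfolding lin_smult[OF a] lin_smult[OF b] smult_diff ..
qed
lemma lin_smult_comp: assumes a: "lin A" shows "lin (\<lambda>p. smult r (A p))"
proof (rule linI)
  fix p q show "smult r (A (p + q)) = smult r (A p) + smult r (A q)"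
    unfolding lin_add[OF a] smult_add ..
next
  fix s p show "smult r (A (smult s p)) = smult s (smult r (A p))"
    unfolding lin_smult[OF a] smult_smult by (simp add: mult.commute)
qed
lemma lin_comm: "lin A \<Longrightarrow> lin B \<Longrightarrow> lin (comm A B)"
  unfolding comm_def by (rule lin_minus_op; rule lin_comp'; assumption)

lemma sum_keys_superset:
  assumes "finite S" "Poly_Mapping.keys p \<subseteq> S" "\<And>w. g w 0 = 0"
  shows "(\<Sum>w\<in>Poly_Mapping.keys p. g w (Poly_Mapping.lookup p w)) = (\<Sum>w\<in>S. g w (Poly_Mapping.lookup p w))"
  using assms by (intro sum.mono_neutral_left) (auto simp: in_keys_iff)

lemma expand: "p = (\<Sum>w\<in>Poly_Mapping.keys p. smult (Poly_Mapping.lookup p w) (wd w))"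
proof (rule poly_mapping_eqI)
  fix k
  have "Poly_Mapping.lookup (\<Sum>w\<in>Poly_Mapping.keys p. smult (Poly_Mapping.lookup p w) (wd w)) k
     = (\<Sum>w\<in>Poly_Mapping.keys p. (if w = k then Poly_Mapping.lookup p w else 0))"
    unfolding lookup_sum by (rule sum.cong) (auto simp: wd_def lookup_single when_def)
  also have "\<dots> = Poly_Mapping.lookup p k"
    by (simp add: sum.delta in_keys_iff)
  finally show "Poly_Mapping.lookup p k = Poly_Mapping.lookup (\<Sum>w\<in>Poly_Mapping.keys p. smult (Poly_Mapping.lookup p w) (wd w)) k" by simp
qed

lemma lin_eqI:
  assumes "lin A" "lin B" "\<And>w. A (wd w) = B (wd w)"
  shows "A p = B p"
proof -
  have "A p = A (\<Sum>w\<in>Poly_Mapping.keys p. smult (Poly_Mapping.lookup p w) (wd w))"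
    using expand[of p] by simp
  also have "\<dots> = B (\<Sum>w\<in>Poly_Mapping.keys p. smult (Poly_Mapping.lookup p w) (wd w))"
    using assms by (simp add: lin_sum lin_smult)
  also have "\<dots> = B p" using expand[of p] by simp
  finally show ?thesis .
qed

lemma lin_eqI_fun:
  assumes "lin A" "lin B" "\<And>w. A (wd w) = B (wd w)"
  shows "A = B"
  using lin_eqI[OF assms] by blast

lemma linext_superset:
  assumes "finite S" "Poly_Mapping.keys p \<subseteq> S"
  shows "linext f p = (\<Sum>w\<in>S. smult (Poly_Mapping.lookup p w) (f w))"
  unfolding linext_def using sum_keys_superset[OF assms, of "\<lambda>w a. smult a (f w)"] by simp

lemma lin_linext: "lin (linext f)"
proof (rule linI)
  fix p q :: ncpoly
  let ?S = "Poly_Mapping.keys p \<union> Poly_Mapping.keys q"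
  have fS: "finite ?S" by simp
  have k: "Poly_Mapping.keys (p + q) \<subseteq> ?S" by (rule keys_add)
  show "linext f (p + q) = linext f p + linext f q"
    by (simp add: linext_superset[OF fS k] linext_superset[OF fS, of p] linext_superset[OF fS, of q]
        lookup_add smult_add_left sum.distrib)
next
  fix r and p :: ncpoly
  have k: "Poly_Mapping.keys (smult r p) \<subseteq> Poly_Mapping.keys p" by (auto simp: in_keys_iff)
  have "linext f (smult r p) = (\<Sum>w\<in>Poly_Mapping.keys p. smult (Poly_Mapping.lookup (smult r p) w) (f w))"
    by (rule linext_superset) (simp_all add: k)
  then show "linext f (smult r p) = smult r (linext f p)"
    by (simp add: smult_sum linext_def)
qed

lemma linext_wd [simp]: "linext f (wd w) = f w"
  by (simp add: linext_def wd_def)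



abbreviation ncm (infixl "\<odot>" 70) where "p \<odot> q \<equiv> ncmult p q"

lemma ncmult_superset:
  assumes "finite U" "finite V" "Poly_Mapping.keys p \<subseteq> U" "Poly_Mapping.keys q \<subseteq> V"
  shows "ncmult p q = (\<Sum>u\<in>U. \<Sum>v\<in>V. Poly_Mapping.single (u @ v) (Poly_Mapping.lookup p u * Poly_Mapping.lookup q v))"
proof -
  have "ncmult p q = (\<Sum>u\<in>Poly_Mapping.keys p. \<Sum>v\<in>V. Poly_Mapping.single (u @ v) (Poly_Mapping.lookup p u * Poly_Mapping.lookup q v))"
    unfolding ncmult_def
    by (rule sum.cong[OF refl], rule sum.mono_neutral_left) (use assms in \<open>auto simp: in_keys_iff\<close>)
  also have "\<dots> = (\<Sum>u\<in>U. \<Sum>v\<in>V. Poly_Mapping.single (u @ v) (Poly_Mapping.lookup p u * Poly_Mapping.lookup q v))"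
    by (rule sum.mono_neutral_left) (use assms in \<open>auto simp: in_keys_iff\<close>)
  finally show ?thesis .
qed

lemma lin_ncmult_left: "lin (\<lambda>p. ncmult p q)"
proof (rule linI)
  fix p p' :: ncpoly
  let ?U = "Poly_Mapping.keys p \<union> Poly_Mapping.keys p'" and ?V = "Poly_Mapping.keys q"
  have k: "Poly_Mapping.keys (p + p') \<subseteq> ?U" by (rule keys_add)
  show "ncmult (p + p') q = ncmult p q + ncmult p' q"
    by (simp add: ncmult_superset[of ?U ?V "p + p'" q] ncmult_superset[of ?U ?V p q]
        ncmult_superset[of ?U ?V p' q] k lookup_add distrib_right single_add sum.distrib)
next
  fix r and p :: ncpoly
  have k: "Poly_Mapping.keys (smult r p) \<subseteq> Poly_Mapping.keys p" by (auto simp: in_keys_iff)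
  have "ncmult (smult r p) q = (\<Sum>u\<in>Poly_Mapping.keys p. \<Sum>v\<in>Poly_Mapping.keys q. Poly_Mapping.single (u @ v) (Poly_Mapping.lookup (smult r p) u * Poly_Mapping.lookup q v))"
    by (rule ncmult_superset) (simp_all add: k)
  then show "ncmult (smult r p) q = smult r (ncmult p q)"
    by (simp add: smult_sum smult_single ncmult_def mult.assoc)
qed

lemma lin_ncmult_right: "lin (\<lambda>q. ncmult p q)"
proof (rule linI)
  fix q q' :: ncpoly
  let ?V = "Poly_Mapping.keys q \<union> Poly_Mapping.keys q'" and ?U = "Poly_Mapping.keys p"
  have k: "Poly_Mapping.keys (q + q') \<subseteq> ?V" by (rule keys_add)
  show "ncmult p (q + q') = ncmult p q + ncmult p q'"
    by (simp add: ncmult_superset[of ?U ?V p "q + q'"] ncmult_superset[of ?U ?V p q]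
        ncmult_superset[of ?U ?V p q'] k lookup_add distrib_left single_add sum.distrib)
next
  fix r and q :: ncpoly
  have k: "Poly_Mapping.keys (smult r q) \<subseteq> Poly_Mapping.keys q" by (auto simp: in_keys_iff)
  have "ncmult p (smult r q) = (\<Sum>u\<in>Poly_Mapping.keys p. \<Sum>v\<in>Poly_Mapping.keys q. Poly_Mapping.single (u @ v) (Poly_Mapping.lookup p u * Poly_Mapping.lookup (smult r q) v))"
    by (rule ncmult_superset) (simp_all add: k)
  then show "ncmult p (smult r q) = smult r (ncmult p q)"
    by (simp add: smult_sum smult_single ncmult_def mult.left_commute)
qed

lemma ncmult_wd [simp]: "ncmult (wd u) (wd v) = wd (u @ v)"
  by (simp add: ncmult_def wd_def)

lemma ncmult_add_left: "(p + p') \<odot> q = p \<odot> q + p' \<odot> q"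
  using lin_add[OF lin_ncmult_left] .
lemma ncmult_add_right: "p \<odot> (q + q') = p \<odot> q + p \<odot> q'"
  using lin_add[OF lin_ncmult_right] .
lemma ncmult_diff_left: "(p - p') \<odot> q = p \<odot> q - p' \<odot> q"
  using lin_diff[OF lin_ncmult_left] .
lemma ncmult_diff_right: "p \<odot> (q - q') = p \<odot> q - p \<odot> q'"
  using lin_diff[OF lin_ncmult_right] .
lemma ncmult_smult_left: "(smult r p) \<odot> q = smult r (p \<odot> q)"
  using lin_smult[OF lin_ncmult_left] .
lemma ncmult_smult_right: "p \<odot> (smult r q) = smult r (p \<odot> q)"
  using lin_smult[OF lin_ncmult_right] .
lemma ncmult_zero_left [simp]: "0 \<odot> q = 0"
  using lin_zero[OF lin_ncmult_left] .
lemma ncmult_zero_right [simp]: "p \<odot> 0 = 0"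
  using lin_zero[OF lin_ncmult_right] .
lemma ncmult_minus_left: "(- p) \<odot> q = - (p \<odot> q)"
  using lin_minus[OF lin_ncmult_left] .
lemma ncmult_minus_right: "p \<odot> (- q) = - (p \<odot> q)"
  using lin_minus[OF lin_ncmult_right] .

lemmas ncmult_distribs = ncmult_add_left ncmult_add_right ncmult_diff_left ncmult_diff_right
  ncmult_smult_left ncmult_smult_right ncmult_minus_left ncmult_minus_right

lemma ncmult_one_left [simp]: "wd [] \<odot> p = p"
proof -
  have "(\<lambda>p. wd [] \<odot> p) p = id p"
    by (rule lin_eqI[OF lin_ncmult_right lin_id]) simp
  then show ?thesis by simp
qed

lemma ncmult_one_right [simp]: "p \<odot> wd [] = p"
proof -
  have "(\<lambda>p. p \<odot> wd []) p = id p"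
    by (rule lin_eqI[OF lin_ncmult_left lin_id]) simp
  then show ?thesis by simp
qed

lemma ncmult_assoc: "(p \<odot> q) \<odot> r = p \<odot> (q \<odot> r)"
proof -
  have A: "(p \<odot> wd v) \<odot> wd w = p \<odot> (wd v \<odot> wd w)" for v w
  proof -
    have "(\<lambda>p. (p \<odot> wd v) \<odot> wd w) p = (\<lambda>p. p \<odot> (wd v \<odot> wd w)) p"
      by (rule lin_eqI[OF lin_comp'[OF lin_ncmult_left lin_ncmult_left] lin_ncmult_left]) simp
    then show ?thesis by simp
  qed
  have B: "(p \<odot> q) \<odot> wd w = p \<odot> (q \<odot> wd w)" for w
  proof -
    have "(\<lambda>q. (p \<odot> q) \<odot> wd w) q = (\<lambda>q. p \<odot> (q \<odot> wd w)) q"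
      by (rule lin_eqI[OF lin_comp'[OF lin_ncmult_left lin_ncmult_right] lin_comp'[OF lin_ncmult_right lin_ncmult_left]])
        (simp add: A)
    then show ?thesis by simp
  qed
  have "(\<lambda>r. (p \<odot> q) \<odot> r) r = (\<lambda>r. p \<odot> (q \<odot> r)) r"
    by (rule lin_eqI[OF lin_ncmult_right lin_comp'[OF lin_ncmult_right lin_ncmult_right]]) (simp add: B)
  then show ?thesis by simp
qed



lemma lin_ident: "lin (\<lambda>p. p)" by (rule linI) simp_all

lemma lin_Hop: "lin Hop" unfolding Hop_def by (rule lin_linext)
lemma lin_d1: "lin d1" unfolding d1_def by (rule lin_linext)
lemma lin_theta: "lin (theta c)" unfolding theta_def by (rule lin_linext)
lemma lin_Rz: "lin Rz" unfolding Rz_def by (rule lin_ncmult_left)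

lemma lin_c_Hop: "lin G \<Longrightarrow> lin (\<lambda>p. Hop (G p))" by (rule lin_comp'[OF lin_Hop])
lemma lin_c_d1: "lin G \<Longrightarrow> lin (\<lambda>p. d1 (G p))" by (rule lin_comp'[OF lin_d1])
lemma lin_c_theta: "lin G \<Longrightarrow> lin (\<lambda>p. theta c (G p))" by (rule lin_comp'[OF lin_theta])
lemma lin_c_Rz: "lin G \<Longrightarrow> lin (\<lambda>p. Rz (G p))" by (rule lin_comp'[OF lin_Rz])
lemma lin_c_ml: "lin G \<Longrightarrow> lin (\<lambda>p. G p \<odot> q)" by (rule lin_comp'[OF lin_ncmult_left])
lemma lin_c_mr: "lin G \<Longrightarrow> lin (\<lambda>p. q \<odot> G p)" by (rule lin_comp'[OF lin_ncmult_right])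
lemma lin_c_smult: "lin G \<Longrightarrow> lin (\<lambda>p. smult r (G p))" by (rule lin_smult_comp)

lemmas lin_intros = lin_plus lin_minus_op lin_c_Hop lin_c_d1 lin_c_theta lin_c_Rz lin_c_ml lin_c_mr
  lin_c_smult lin_ident

lemma bilin_eqI:
  assumes "\<And>q. lin (\<lambda>p. F p q)" "\<And>q. lin (\<lambda>p. G p q)" "\<And>p. lin (\<lambda>q. F p q)" "\<And>p. lin (\<lambda>q. G p q)"
    "\<And>u v. F (wd u) (wd v) = G (wd u) (wd v)"
  shows "F p q = G p q"
proof -
  have *: "F (wd u) q = G (wd u) q" for u
    by (rule lin_eqI[OF assms(3)[of "wd u"] assms(4)[of "wd u"]]) (rule assms(5))
  show ?thesis
    by (rule lin_eqI[OF assms(1)[of q] assms(2)[of q]]) (rule *)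
qed

lemma wd_cons: "wd (a # u) = wd [a] \<odot> wd u" by simp
lemma wd_append: "wd (u @ v) = wd u \<odot> wd v" by simp

lemma Hop_wd: "Hop (wd w) = smult (of_nat (length w)) (wd w)"
  by (simp add: Hop_def)

lemma d1_wd: "d1 (wd w) = d1_word w" by (simp add: d1_def)
lemma theta_wd: "theta c (wd w) = theta_word c w" by (simp add: theta_def)

lemma d1_word_append: "d1_word (u @ v) = d1_word u \<odot> wd v + wd u \<odot> d1_word v"
proof (induction u)
  case Nil then show ?case by simp
next
  case (Cons a u)
  have "d1_word ((a # u) @ v) = d1_letter a \<odot> (wd u \<odot> wd v) + wd [a] \<odot> (d1_word u \<odot> wd v + wd u \<odot> d1_word v)"
    using Cons by simp
  also have "\<dots> = d1_word (a # u) \<odot> wd v + wd (a # u) \<odot> d1_word v"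
    by (simp only: d1_word.simps ncmult_distribs ncmult_assoc wd_cons[of a u] add_ac)
  finally show ?case .
qed

lemma Hop_append: "Hop (p \<odot> q) = Hop p \<odot> q + p \<odot> Hop q"
  by (rule bilin_eqI[where F = "\<lambda>p q. Hop (p \<odot> q)"], (intro lin_intros)+)
     (simp add: Hop_wd ncmult_distribs smult_add_left)

lemma d1_mult: "d1 (p \<odot> q) = d1 p \<odot> q + p \<odot> d1 q"
  by (rule bilin_eqI[where F = "\<lambda>p q. d1 (p \<odot> q)"], (intro lin_intros)+)
     (simp add: d1_wd d1_word_append)



lemma theta_word_append:
  "theta_word c (u @ v) = theta_word c u \<odot> wd v + wd u \<odot> theta_word c v + smult c (d1_word u \<odot> Hop (wd v))"
proof (induction u)
  case Nil then show ?case by (simp add: Hop_wd)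
next
  case (Cons a u)
  have H: "Hop (wd (u @ v)) = Hop (wd u) \<odot> wd v + wd u \<odot> Hop (wd v)"
    using Hop_append[of "wd u" "wd v"] by simp
  have "theta_word c ((a # u) @ v) = theta_letter a \<odot> (wd u \<odot> wd v) + wd [a] \<odot> (theta_word c u \<odot> wd v + wd u \<odot> theta_word c v + smult c (d1_word u \<odot> Hop (wd v)))
     + smult c (d1_letter a \<odot> (Hop (wd u) \<odot> wd v + wd u \<odot> Hop (wd v)))"
    using Cons H by simp
  also have "\<dots> = theta_word c (a # u) \<odot> wd v + wd (a # u) \<odot> theta_word c v + smult c (d1_word (a # u) \<odot> Hop (wd v))"
    by (simp only: theta_word.simps d1_word.simps ncmult_distribs ncmult_assoc wd_cons[of a u] add_ac smult_add)
  finally show ?case .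
qed

lemma theta_mult: "theta c (p \<odot> q) = theta c p \<odot> q + p \<odot> theta c q + smult c (d1 p \<odot> Hop q)"
  by (rule bilin_eqI[where F = "\<lambda>p q. theta c (p \<odot> q)"], (intro lin_intros)+)
     (simp add: theta_wd d1_wd theta_word_append)



definition eps :: "letter \<Rightarrow> rat" where "eps a = (case a of X \<Rightarrow> 1 | Y \<Rightarrow> -1)"

definition Dk :: "rat \<Rightarrow> nat \<Rightarrow> ncpoly \<Rightarrow> ncpoly" where
  "Dk c k = (comm (theta c) ^^ k) d1"

lemma Dk_0: "Dk c 0 = d1" by (simp add: Dk_def)
lemma Dk_Suc: "Dk c (Suc k) p = theta c (Dk c k p) - Dk c k (theta c p)"
  by (simp add: Dk_def comm_def)

lemma lin_Dk: "lin (Dk c k)"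
proof (induction k)
  case 0 then show ?case by (simp add: Dk_0 lin_d1)
next
  case (Suc k)
  have "lin (comm (theta c) (Dk c k))" by (rule lin_comm[OF lin_theta Suc])
  moreover have "comm (theta c) (Dk c k) = Dk c (Suc k)"
    by (rule ext) (simp add: Dk_Suc comm_def)
  ultimately show ?case by simp
qed

lemma lin_phi: "lin (phi c n)"
proof (induction n)
  case 0 then show ?case by (simp add: lin_ident)
next
  case (Suc n)
  have l: "lin (\<lambda>p. theta c (phi c n p))" "lin (\<lambda>p. phi c n (theta c p))"
    "lin (\<lambda>p. phi c n (Rz p))"
    by (rule lin_comp'[OF lin_theta Suc], rule lin_comp'[OF Suc lin_theta], rule lin_comp'[OF Suc lin_Rz])
  show ?case unfolding phi.simps comm_def
    by (intro lin_intros l Suc)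
qed

lemma lin_c_phi: "lin G \<Longrightarrow> lin (\<lambda>p. phi c n (G p))" by (rule lin_comp'[OF lin_phi])
lemma lin_c_Dk: "lin G \<Longrightarrow> lin (\<lambda>p. Dk c k (G p))" by (rule lin_comp'[OF lin_Dk])
lemmas lin_intros2 = lin_intros lin_c_phi lin_c_Dk

lemmas theta_lin = lin_add[OF lin_theta] lin_diff[OF lin_theta] lin_smult[OF lin_theta] lin_minus[OF lin_theta] lin_zero[OF lin_theta]
lemmas d1_lin = lin_add[OF lin_d1] lin_diff[OF lin_d1] lin_smult[OF lin_d1] lin_minus[OF lin_d1] lin_zero[OF lin_d1]
lemmas phi_lin = lin_add[OF lin_phi] lin_diff[OF lin_phi] lin_smult[OF lin_phi] lin_minus[OF lin_phi] lin_zero[OF lin_phi]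
lemmas Dk_lin = lin_add[OF lin_Dk] lin_diff[OF lin_Dk] lin_smult[OF lin_Dk] lin_minus[OF lin_Dk] lin_zero[OF lin_Dk]

lemma half_double: "smult (1/2) (q + q) = q"
  by (rule poly_mapping_eqI) (simp add: lookup_add)

lemma zz_X_Y: "zz = wd [X] + wd [Y]" by (simp add: zz_def)

lemma d1_letter_eps: "d1_letter a = smult (eps a) (wd [X] \<odot> wd [Y])"
  by (cases a) (simp_all add: eps_def, rule poly_mapping_eqI, simp add: wd_def)

lemma d1_zz: "d1 zz = 0"
  by (simp add: zz_def d1_lin d1_wd)

lemma Hop_zz: "Hop zz = zz"
  by (simp add: zz_def lin_add[OF lin_Hop] Hop_wd)

lemma theta_zz: "theta c zz = zz \<odot> zz"
proof -
  have "theta c zz = theta_letter X + theta_letter Y"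
    by (simp add: zz_def theta_lin theta_wd Hop_wd)
  also have "\<dots> = smult (1/2) (zz \<odot> zz + zz \<odot> zz)"
    unfolding theta_letter_def smult_add[symmetric]
    by (simp add: zz_X_Y ncmult_distribs add_ac)
  finally show ?thesis by (simp add: half_double)
qed

lemma theta_letter_wd: "theta c (wd [a]) = theta_letter a"
  by (simp add: theta_wd Hop_wd)
lemma d1_letter_wd: "d1 (wd [a]) = d1_letter a"
  by (simp add: d1_wd)

lemma theta_rec: "theta c (p \<odot> wd [a]) = theta c p \<odot> wd [a] + p \<odot> smult (1/2) (wd [a] \<odot> zz + zz \<odot> wd [a]) + smult c (d1 p \<odot> wd [a])"
  by (simp add: theta_mult theta_letter_wd theta_letter_def Hop_wd)

lemma d1_rec: "d1 (p \<odot> wd [a]) = d1 p \<odot> wd [a] + smult (eps a) (p \<odot> wd [X] \<odot> wd [Y])"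
  by (simp add: d1_mult d1_letter_wd d1_letter_eps ncmult_distribs ncmult_assoc)

lemma theta_rec_z: "theta c (p \<odot> zz) = theta c p \<odot> zz + p \<odot> zz \<odot> zz + smult c (d1 p \<odot> zz)"
  by (simp add: theta_mult theta_zz Hop_zz ncmult_assoc)

lemma d1_rec_z: "d1 (p \<odot> zz) = d1 p \<odot> zz"
  by (simp add: d1_mult d1_zz)

lemma d1_one: "d1 (wd []) = 0" by (simp add: d1_wd)
lemma theta_one: "theta c (wd []) = 0" by (simp add: theta_wd)

lemma Dk_one: "Dk c k (wd []) = 0"
  by (induction k) (simp_all add: Dk_0 d1_one Dk_Suc theta_one lin_zero[OF lin_theta] lin_zero[OF lin_Dk])

lemma phi_Suc': "smult (of_nat (Suc n)) (phi c (Suc n) p) =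
   theta c (phi c n p) - phi c n (theta c p) + smult (1/2) (phi c n p \<odot> zz + phi c n (p \<odot> zz)) + smult c (d1 (phi c n p))"
  by (simp add: comm_def Rz_def)



lemmas expand_simps = theta_lin d1_lin phi_lin Dk_lin ncmult_distribs ncmult_assoc[symmetric]
  smult_add smult_diff smult_smult smult_minus

lemma Cz:
  assumes C: "\<And>p a. Dk c k (p \<odot> wd [a]) = Dk c k p \<odot> wd [a] + smult (eps a * fact k) (phi c k (p \<odot> wd [X]) \<odot> wd [Y])"
  shows "Dk c k (p \<odot> zz) = Dk c k p \<odot> zz"
  by (simp add: zz_X_Y ncmult_distribs Dk_lin C eps_def smult_add_left[symmetric])

lemma C_step:
  assumes C: "\<And>p a. Dk c k (p \<odot> wd [a]) = Dk c k p \<odot> wd [a] + smult (eps a * fact k) (phi c k (p \<odot> wd [X]) \<odot> wd [Y])"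
    and P3: "\<And>p. d1 (Dk c k p) = Dk c k (d1 p)"
  shows "Dk c (Suc k) (p \<odot> wd [a]) = Dk c (Suc k) p \<odot> wd [a] + smult (eps a * fact (Suc k)) (phi c (Suc k) (p \<odot> wd [X]) \<odot> wd [Y])"
proof -
  have Cz': "\<And>p. Dk c k (p \<odot> zz) = Dk c k p \<odot> zz" by (rule Cz[OF C])
  have r: "smult (eps a * fact (Suc k)) (phi c (Suc k) (p \<odot> wd [X]) \<odot> wd [Y]) =
     smult (eps a * fact k) (smult (of_nat (Suc k)) (phi c (Suc k) (p \<odot> wd [X])) \<odot> wd [Y])"
    by (simp add: ncmult_smult_left mult_ac)
  show ?thesis
    unfolding r phi_Suc'
    apply (rule poly_mapping_eqI)
    by (simp add: Dk_Suc C Cz' P3 theta_rec d1_rec expand_simps lookup_add lookup_minus)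
qed

lemma phi_y:
  assumes P1: "\<And>p. phi c k (p \<odot> zz) = phi c k p \<odot> zz"
  shows "phi c k (r \<odot> wd [Y]) = phi c k r \<odot> wd [X] + phi c k r \<odot> wd [Y] - phi c k (r \<odot> wd [X])"
  using P1[of r] by (simp add: zz_X_Y ncmult_distribs phi_lin algebra_simps)

lemma P3_of:
  assumes C: "\<And>p a. Dk c k (p \<odot> wd [a]) = Dk c k p \<odot> wd [a] + smult (eps a * fact k) (phi c k (p \<odot> wd [X]) \<odot> wd [Y])"
    and P2: "\<And>p. d1 (phi c k p) = phi c k (d1 p)"
    and P1: "\<And>p. phi c k (p \<odot> zz) = phi c k p \<odot> zz"
  shows "d1 (Dk c k p) = Dk c k (d1 p)"
proof -
  have py: "\<And>r. phi c k (r \<odot> wd [Y]) = phi c k r \<odot> wd [X] + phi c k r \<odot> wd [Y] - phi c k (r \<odot> wd [X])"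
    by (rule phi_y[OF P1])
  have "d1 (Dk c k (wd w)) = Dk c k (d1 (wd w))" for w
  proof (induction w rule: rev_induct)
    case Nil then show ?case by (simp add: Dk_one d1_one Dk_lin d1_lin)
  next
    case (snoc a w)
    have e: "wd (w @ [a]) = wd w \<odot> wd [a]" by simp
    show ?case unfolding e
      apply (rule poly_mapping_eqI)
      apply (simp add: C P2 py snoc d1_rec expand_simps lookup_add lookup_minus eps_def del: ncmult_wd)
      done
  qed
  then show ?thesis
    by (rule lin_eqI[OF lin_comp'[OF lin_d1 lin_Dk] lin_comp'[OF lin_Dk lin_d1], where p = p])
qed

lemma P2_step:
  assumes P2a: "\<And>p. Dk c j (phi c n p) = phi c n (Dk c j p)"
    and P2b: "\<And>p. Dk c (Suc j) (phi c n p) = phi c n (Dk c (Suc j) p)"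
    and P3: "\<And>p. d1 (Dk c j p) = Dk c j (d1 p)"
    and Cz: "\<And>p. Dk c j (p \<odot> zz) = Dk c j p \<odot> zz"
  shows "Dk c j (phi c (Suc n) p) = phi c (Suc n) (Dk c j p)"
proof -
  have DT: "\<And>r. Dk c j (theta c r) = theta c (Dk c j r) - Dk c (Suc j) r"
    by (simp add: Dk_Suc)
  show ?thesis
    apply (rule poly_mapping_eqI)
    apply (simp add: comm_def Rz_def DT P2a P2b P3[symmetric] Cz expand_simps lookup_add lookup_minus)
    done
qed

lemma P1_step:
  assumes P1: "\<And>p. phi c n (p \<odot> zz) = phi c n p \<odot> zz"
    and P2: "\<And>p. d1 (phi c n p) = phi c n (d1 p)"
  shows "phi c (Suc n) (p \<odot> zz) = phi c (Suc n) p \<odot> zz"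
  apply (rule poly_mapping_eqI)
  apply (simp add: comm_def Rz_def P1 P2 theta_rec_z d1_rec_z expand_simps lookup_add lookup_minus)
  done



definition "CC c j \<longleftrightarrow> (\<forall>p a. Dk c j (p \<odot> wd [a]) = Dk c j p \<odot> wd [a] + smult (eps a * fact j) (phi c j (p \<odot> wd [X]) \<odot> wd [Y]))"
definition "PP1 c m \<longleftrightarrow> (\<forall>p. phi c m (p \<odot> zz) = phi c m p \<odot> zz)"
definition "PP2 c j m \<longleftrightarrow> (\<forall>p. Dk c j (phi c m p) = phi c m (Dk c j p))"
definition "PP3 c j \<longleftrightarrow> (\<forall>p. d1 (Dk c j p) = Dk c j (d1 p))"

lemma C0: "CC c 0"
  unfolding CC_def by (simp add: Dk_0 d1_rec ncmult_assoc)

lemma main_ind: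
  "(\<forall>j m. j + m \<le> N \<longrightarrow> PP2 c j m) \<and> (\<forall>j\<le>N. PP3 c j \<and> CC c j) \<and> (\<forall>m\<le>N. PP1 c m)"
proof (induction N)
  case 0
  have "PP2 c 0 0" by (simp add: PP2_def)
  moreover have "PP3 c 0" by (simp add: PP3_def Dk_0)
  moreover have "PP1 c 0" by (simp add: PP1_def)
  ultimately show ?case using C0 by auto
next
  case (Suc N)
  then have IH2: "\<And>j m. j + m \<le> N \<Longrightarrow> PP2 c j m" and IH3: "\<And>j. j \<le> N \<Longrightarrow> PP3 c j"
    and IHC: "\<And>j. j \<le> N \<Longrightarrow> CC c j" and IH1: "\<And>m. m \<le> N \<Longrightarrow> PP1 c m" by auto
  have CN: "CC c (Suc N)"
    unfolding CC_def
    using C_step[of c N] IHC[of N, unfolded CC_def] IH3[of N, unfolded PP3_def] by auto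
  have P2N0: "PP2 c 0 N" using IH2[of 0 N] by simp
  have P1N: "PP1 c (Suc N)"
    unfolding PP1_def
    using P1_step[of c N] IH1[of N, unfolded PP1_def] P2N0[unfolded PP2_def Dk_0] by auto
  have P2N: "PP2 c j m" if "j + m = Suc N" for j m
    using that
  proof (induction m arbitrary: j)
    case 0 then show ?case by (simp add: PP2_def)
  next
    case (Suc m)
    have a: "PP2 c j m" using IH2[of j m] Suc.prems by simp
    have b: "PP2 c (Suc j) m" using Suc.IH[of "Suc j"] Suc.prems by simp
    have jN: "j \<le> N" using Suc.prems by simp
    have Cz: "\<And>p. Dk c j (p \<odot> zz) = Dk c j p \<odot> zz"
      by (rule Cz) (use IHC[OF jN] in \<open>simp add: CC_def\<close>)
    show ?case unfolding PP2_def
      using P2_step[of c j m] a b IH3[OF jN] Cz by (auto simp: PP2_def PP3_def)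
  qed
  have P3N: "PP3 c (Suc N)"
    unfolding PP3_def
  proof
    fix p
    have "PP2 c 0 (Suc N)" by (rule P2N) simp
    then show "d1 (Dk c (Suc N) p) = Dk c (Suc N) (d1 p)"
      using P3_of[of c "Suc N" p] CN P1N by (auto simp: CC_def PP1_def PP2_def Dk_0)
  qed
  show ?case
  proof (intro conjI allI impI)
    fix j m assume "j + m \<le> Suc N"
    then show "PP2 c j m" using IH2[of j m] P2N[of j m] by (cases "j + m = Suc N") auto
  next
    fix j assume "j \<le> Suc N"
    then show "PP3 c j" using IH3[of j] P3N by (cases "j = Suc N") auto
  next
    fix j assume "j \<le> Suc N"
    then show "CC c j" using IHC[of j] CN by (cases "j = Suc N") auto
  next
    fix m assume "m \<le> Suc N"
    then show "PP1 c m" using IH1[of m] P1N by (cases "m = Suc N") auto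
  qed
qed

lemma phi_comm_Rz: "phi c n (p \<odot> zz) = phi c n p \<odot> zz"
  using main_ind[of n c] by (auto simp: PP1_def)

lemma phi_comm_d1: "d1 (phi c n p) = phi c n (d1 p)"
proof -
  have "PP2 c 0 n" using main_ind[of n c] by auto
  then show ?thesis by (simp add: PP2_def Dk_0)
qed

lemma psi: "((ad (theta c)) ^^ n) Rz = (\<lambda>p. smult (fact n) (Rz (phi c n p)))"
proof (induction n)
  case 0 then show ?case by (rule ext) (simp add: Rz_def)
next
  case (Suc n)
  show ?case
  proof (rule ext)
    fix p
    have "((ad (theta c)) ^^ Suc n) Rz p = theta c (smult (fact n) (Rz (phi c n p))) - smult (fact n) (Rz (phi c n (theta c p)))"
    proof -
      have "((ad (theta c)) ^^ Suc n) Rz = ad (theta c) (((ad (theta c)) ^^ n) Rz)" by simp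
      also have "\<dots> = ad (theta c) (\<lambda>p. smult (fact n) (Rz (phi c n p)))" by (simp only: Suc)
      finally show ?thesis by (simp add: ad_def comm_def)
    qed
    also have "\<dots> = smult (fact (Suc n)) (Rz (phi c (Suc n) p))"
      apply (rule poly_mapping_eqI)
      apply (simp add: comm_def Rz_def phi_comm_Rz phi_comm_d1 theta_rec_z expand_simps lookup_add lookup_minus)
      apply (simp add: algebra_simps)
      apply (subst eq_divide_eq)
      apply (simp add: algebra_simps)
      done
    finally show "((ad (theta c)) ^^ Suc n) Rz p = smult (fact (Suc n)) (Rz (phi c (Suc n) p))" .
  qed
qed

theorem mainTheorem8:
  fixes n :: nat and c :: rat
  shows "Rz \<circ> phi c n = (\<lambda>p. smult (1 / fact n) (((ad (theta c)) ^^ n) Rz p))"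
  by (rule ext) (simp add: psi)


end
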